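(* Let $p,q,r$ be CPC patterns and $\rho,\vartheta,\theta$ substitutions. If $p,{\sf id}_{{\sf bn}(p)}\sqsubseteq q,\rho$ and $\{p\,\|\,r\}=(\vartheta,\theta)$, then $\{q\,\|\,r\}=(\vartheta[\rho],\theta)$.
   Context: CPC patterns over a countable set of names: $p ::= \lambda x \mid x \mid \ulcorner x\urcorner \mid p\bullet p$ (binding name, variable name, protected name, compound). ${\sf bn}(p)$, ${\sf vn}(p)$, ${\sf pn}(p)$ are the sets of binding, variable and protected names of $p$; ${\sf fn}(p)={\sf vn}(p)\cup{\sf pn}(p)$. Patterns are well formed (binding names pairwise distinct and distinct from free names). Communicable patterns contain no protected or binding names; protection extends to them by $\ulcorner p\bullet q\urcorner=\ulcorner p\urcorner\bullet\ulcorner q\urcorner$. A substitution is a finite partial function from names to communicable patterns, applied to patterns by $\sigma x=\sigma(x)$ if $x\in{\sf dom}(\sigma)$ else $x$; $\sigma\ulcorner x\urcorner=\ulcorner\sigma(x)\urcorner$ if $x\in{\sf dom}(\sigma)$ else $\ulcorner x\urcorner$; $\sigma(\lambda x)=\lambda x$; $\sigma(p\bullet q)=\sigma p\bullet\sigma q$. ${\sf id}_X$ is the identity substitution on a finite set $X$. $\hat\sigma$ acts by $\hat\sigma x=x$, $\hat\sigma\ulcorner x\urcorner=\ulcorner x\urcorner$, $\hat\sigma(\lambda x)=\sigma(x)$ if $x\in{\sf dom}(\sigma)$ else $\lambda x$, $\hat\sigma(p\bullet q)=\hat\sigma p\bullet\hat\sigma q$. For substitutions $\vartheta,\rho$, $\vartheta[\rho]$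 is the substitution with domain ${\sf dom}(\rho)$ mapping each $x$ to $\vartheta(\rho(x))$. Unification $\{p\,\|\,q\}$ is a pair of substitutions or undefined: $\{x\|x\}=\{x\|\ulcorner x\urcorner\}=\{\ulcorner x\urcorner\|x\}=\{\ulcorner x\urcorner\|\ulcorner x\urcorner\}=(\{\},\{\})$; $\{\lambda x\|q\}=(\{q/x\},\{\})$ if $q$ is communicable; $\{p\|\lambda x\}=(\{\},\{p/x\})$ if $p$ is communicable; $\{p_1\bullet p_2\|q_1\bullet q_2\}=(\sigma_1\cup\sigma_2,\rho_1\cup\rho_2)$ if $\{p_i\|q_i\}=(\sigma_i,\rho_i)$ for $i=1,2$; undefined otherwise. A match $(p,\sigma)$ is a pattern $p$ and substitution $\sigma$ with ${\sf dom}(\sigma)={\sf bn}(p)$. Compatibility $p,\sigma\sqsubseteq q,\rho$ is the least relation between matches with: $p,\sigma\sqsubseteq\lambda y,\{\hat\sigma p/y\}$ if ${\sf fn}(p)=\emptyset$; $n,\{\}\sqsubseteq n,\{\}$; $\ulcorner n\urcorner,\{\}\sqsubseteq\ulcorner n\urcorner,\{\}$; $\ulcorner n\urcorner,\{\}\sqsubseteq n,\{\}$; $p_1\bullet p_2,\sigma_1\cup\sigma_2\sqsubseteq q_1\bullet q_2,\rho_1\cup\rho_2$ if $p_i,\sigma_i\sqsubseteq q_i,\rho_i$ for $i=1,2$. *)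

theory Defs
  imports Main
begin

datatype 'n pat = Bind 'n | Var 'n | Prot 'n | Comp "'n pat" "'n pat"

fun bnl :: "'n pat \<Rightarrow> 'n list" where
  "bnl (Bind x) = [x]"
| "bnl (Var x) = []"
| "bnl (Prot x) = []"
| "bnl (Comp p q) = bnl p @ bnl q"

definition bn :: "'n pat \<Rightarrow> 'n set" where "bn p = set (bnl p)"

fun vn :: "'n pat \<Rightarrow> 'n set" where
  "vn (Bind x) = {}"
| "vn (Var x) = {x}"
| "vn (Prot x) = {}"
| "vn (Comp p q) = vn p \<union> vn q"

fun pn :: "'n pat \<Rightarrow> 'n set" where
  "pn (Bind x) = {}"
| "pn (Var x) = {}"
| "pn (Prot x) = {x}"
| "pn (Comp p q) = pn p \<union> pn q"

definition fn :: "'n pat \<Rightarrow> 'n set" where "fn p = vn p \<union> pn p"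

definition wf_pat :: "'n pat \<Rightarrow> bool" where
  "wf_pat p \<longleftrightarrow> distinct (bnl p) \<and> bn p \<inter> fn p = {}"

fun communicable :: "'n pat \<Rightarrow> bool" where
  "communicable (Bind x) = False"
| "communicable (Var x) = True"
| "communicable (Prot x) = False"
| "communicable (Comp p q) = (communicable p \<and> communicable q)"

text \<open>Protection of a communicable pattern (identity on other shapes, never used there).\<close>
fun protect :: "'n pat \<Rightarrow> 'n pat" where
  "protect (Var x) = Prot x"
| "protect (Comp p q) = Comp (protect p) (protect q)"
| "protect p = p"

type_synonym 'n subst = "'n \<rightharpoonup> 'n pat"

definition is_subst :: "'n subst \<Rightarrow> bool" where
  "is_subst \<sigma> \<longleftrightarrow> finite (dom \<sigma>) \<and> (\<forall>t\<in>ran \<sigma>. communicable t)"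

fun app_subst :: "'n subst \<Rightarrow> 'n pat \<Rightarrow> 'n pat" where
  "app_subst \<sigma> (Var x) = (case \<sigma> x of Some t \<Rightarrow> t | None \<Rightarrow> Var x)"
| "app_subst \<sigma> (Prot x) = (case \<sigma> x of Some t \<Rightarrow> protect t | None \<Rightarrow> Prot x)"
| "app_subst \<sigma> (Bind x) = Bind x"
| "app_subst \<sigma> (Comp p q) = Comp (app_subst \<sigma> p) (app_subst \<sigma> q)"

fun hat_subst :: "'n subst \<Rightarrow> 'n pat \<Rightarrow> 'n pat" where
  "hat_subst \<sigma> (Var x) = Var x"
| "hat_subst \<sigma> (Prot x) = Prot x"
| "hat_subst \<sigma> (Bind x) = (case \<sigma> x of Some t \<Rightarrow> t | None \<Rightarrow> Bind x)"
| "hat_subst \<sigma> (Comp p q) = Comp (hat_subst \<sigma> p) (hat_subst \<sigma> q)"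

definition id_on :: "'n set \<Rightarrow> 'n subst" where
  "id_on X = (\<lambda>x. if x \<in> X then Some (Var x) else None)"

text \<open>\<open>\<phi>[\<rho>]\<close>: domain dom \<rho>, x maps to \<phi>(\<rho>(x)).\<close>
definition subst_comp :: "'n subst \<Rightarrow> 'n subst \<Rightarrow> 'n subst" where
  "subst_comp \<phi> \<rho> = (\<lambda>x. map_option (app_subst \<phi>) (\<rho> x))"

text \<open>Unification; union of substitutions is map union (domains are disjoint
  for well formed patterns).\<close>
fun unify :: "'n pat \<Rightarrow> 'n pat \<Rightarrow> ('n subst \<times> 'n subst) option" where
  "unify (Bind x) q = (if communicable q then Some ([x \<mapsto> q], Map.empty) else None)"
| "unify p (Bind y) = (if communicable p then Some (Map.empty, [y \<mapsto> p]) else None)"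
| "unify (Var x) (Var y) = (if x = y then Some (Map.empty, Map.empty) else None)"
| "unify (Var x) (Prot y) = (if x = y then Some (Map.empty, Map.empty) else None)"
| "unify (Prot x) (Var y) = (if x = y then Some (Map.empty, Map.empty) else None)"
| "unify (Prot x) (Prot y) = (if x = y then Some (Map.empty, Map.empty) else None)"
| "unify (Comp p1 p2) (Comp q1 q2) =
     (case (unify p1 q1, unify p2 q2) of
        (Some (s1, r1), Some (s2, r2)) \<Rightarrow> Some (s1 ++ s2, r1 ++ r2)
      | _ \<Rightarrow> None)"
| "unify _ _ = None"

inductive compat :: "'n pat \<Rightarrow> 'n subst \<Rightarrow> 'n pat \<Rightarrow> 'n subst \<Rightarrow> bool" where
  bind: "\<lbrakk>dom \<sigma> = bn p; is_subst \<sigma>; fn p = {}\<rbrakk>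
         \<Longrightarrow> compat p \<sigma> (Bind y) [y \<mapsto> hat_subst \<sigma> p]"
| var: "compat (Var n) Map.empty (Var n) Map.empty"
| prot: "compat (Prot n) Map.empty (Prot n) Map.empty"
| prot_var: "compat (Prot n) Map.empty (Var n) Map.empty"
| comp: "\<lbrakk>compat p1 \<sigma>1 q1 \<rho>1; compat p2 \<sigma>2 q2 \<rho>2\<rbrakk>
         \<Longrightarrow> compat (Comp p1 p2) (\<sigma>1 ++ \<sigma>2) (Comp q1 q2) (\<rho>1 ++ \<rho>2)"

end

theory Submission
  imports Defs
begin

lemma wf_comp: "wf_pat (Comp a b) \<Longrightarrow> wf_pat a \<and> wf_pat b \<and> bn a \<inter> bn b = {}"
  by (auto simp: wf_pat_def bn_def fn_def)

lemma comm_vn: "communicable p \<Longrightarrow> vn p \<noteq> {}"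
  by (induction p) auto

lemma app_cong: "(\<forall>v \<in> vn t \<union> pn t. \<tau> v = \<tau>' v) \<Longrightarrow> app_subst \<tau> t = app_subst \<tau>' t"
  by (induction t) auto

lemma comm_bnl: "communicable p \<Longrightarrow> bnl p = []"
  by (induction p) auto

lemma unify_dom: "unify p r = Some (\<phi>, \<theta>) \<Longrightarrow> dom \<phi> = bn p"
proof (induction p r arbitrary: \<phi> \<theta> rule: unify.induct)
  case (7 p1 p2 q1 q2)
  from "7.prems" obtain s1 t1 s2 t2 where u1: "unify p1 q1 = Some (s1, t1)"
    and u2: "unify p2 q2 = Some (s2, t2)" and e: "\<phi> = s1 ++ s2"
    by (auto split: option.splits)
  show ?case using "7.IH"(1)[OF u1] "7.IH"(2)[OF u2] e by (simp add: bn_def dom_map_add Un_commute)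
qed (auto simp: bn_def comm_bnl split: if_splits)

lemma compat_dom: "compat p \<sigma> q \<rho> \<Longrightarrow> dom \<sigma> = bn p"
  by (induction rule: compat.induct) (auto simp: bn_def)

lemma compat_comm: "compat p \<sigma> q \<rho> \<Longrightarrow> communicable p \<Longrightarrow> q = p \<and> \<rho> = Map.empty"
  by (induction rule: compat.induct) (auto simp: fn_def dest: comm_vn)

lemma hat_vars: "fn p = {} \<Longrightarrow> vn (hat_subst (id_on X) p) \<union> pn (hat_subst (id_on X) p) \<subseteq> bn p"
  by (induction p) (auto simp: fn_def bn_def id_on_def)

lemma bind_unify:
  "fn p = {} \<Longrightarrow> wf_pat p \<Longrightarrow> bn p \<subseteq> X \<Longrightarrow> unify p r = Some (\<phi>, \<theta>) \<Longrightarrow>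
   \<theta> = Map.empty \<and> communicable r \<and> app_subst \<phi> (hat_subst (id_on X) p) = r"
proof (induction p arbitrary: r \<phi> \<theta>)
  case (Bind x)
  then show ?case by (auto simp: id_on_def bn_def split: if_splits)
next
  case (Var x) then show ?case by (simp add: fn_def)
next
  case (Prot x) then show ?case by (simp add: fn_def)
next
  case (Comp p1 p2)
  have w: "wf_pat p1" "wf_pat p2" "bn p1 \<inter> bn p2 = {}" using wf_comp[OF Comp.prems(2)] by auto
  have f: "fn p1 = {}" "fn p2 = {}" using Comp.prems(1) by (auto simp: fn_def)
  have b: "bn p1 \<subseteq> X" "bn p2 \<subseteq> X" using Comp.prems(3) by (auto simp: bn_def)
  have nc: "\<not> communicable (Comp p1 p2)"
    using comm_vn[of "Comp p1 p2"] Comp.prems(1) by (auto simp: fn_def)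
  show ?case
  proof (cases r)
    case (Comp r1 r2)
    from Comp.prems(4) obtain s1 t1 s2 t2 where u1: "unify p1 r1 = Some (s1, t1)"
      and u2: "unify p2 r2 = Some (s2, t2)" and e: "\<phi> = s1 ++ s2" "\<theta> = t1 ++ t2"
      using \<open>r = Comp r1 r2\<close> by (auto split: option.splits)
    note I1 = Comp.IH(1)[OF f(1) w(1) b(1) u1]
    note I2 = Comp.IH(2)[OF f(2) w(2) b(2) u2]
    have "app_subst (s1 ++ s2) (hat_subst (id_on X) p1) = app_subst s1 (hat_subst (id_on X) p1)"
    proof (rule app_cong, intro ballI)
      fix v assume "v \<in> vn (hat_subst (id_on X) p1) \<union> pn (hat_subst (id_on X) p1)"
      hence "v \<in> bn p1" using hat_vars[OF f(1)] by blast
      hence "v \<notin> dom s2" using unify_dom[OF u2] w(3) by blast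
      thus "(s1 ++ s2) v = s1 v" by (simp add: map_add_dom_app_simps(3))
    qed
    moreover have "app_subst (s1 ++ s2) (hat_subst (id_on X) p2) = app_subst s2 (hat_subst (id_on X) p2)"
    proof (rule app_cong, intro ballI)
      fix v assume "v \<in> vn (hat_subst (id_on X) p2) \<union> pn (hat_subst (id_on X) p2)"
      hence "v \<in> bn p2" using hat_vars[OF f(2)] by blast
      hence "v \<in> dom s2" using unify_dom[OF u2] by blast
      thus "(s1 ++ s2) v = s2 v" by (simp add: map_add_dom_app_simps(1))
    qed
    ultimately show ?thesis using I1 I2 unfolding e \<open>r = Comp r1 r2\<close> by simp
  next
    case (Bind y) then show ?thesis using Comp.prems(4) nc by (simp split: if_splits)
  qed (use Comp.prems(4) in simp_all)
qed

lemma id_split: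
  assumes "dom s1 = A" "dom s2 = B" "A \<inter> B = {}" "s1 ++ s2 = id_on (A \<union> B)"
  shows "s1 = id_on A \<and> s2 = id_on B"
proof -
  have "s1 x = id_on A x" for x
  proof (cases "x \<in> A")
    case True
    hence "x \<notin> dom s2" using assms by auto
    hence "(s1 ++ s2) x = s1 x" by (simp add: map_add_dom_app_simps(3))
    thus ?thesis using assms(4) True by (simp add: id_on_def)
  next
    case False then show ?thesis using assms(1) by (auto simp: id_on_def)
  qed
  moreover have "s2 x = id_on B x" for x
  proof (cases "x \<in> B")
    case True
    hence "x \<in> dom s2" using assms by auto
    hence "(s1 ++ s2) x = s2 x" by (simp add: map_add_dom_app_simps(1))
    thus ?thesis using assms(4) True by (simp add: id_on_def)
  next
    case False then show ?thesis using assms(2) by (auto simp: id_on_def)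
  qed
  ultimately show ?thesis by auto
qed

lemma subst_comp_add: "subst_comp \<phi> (r1 ++ r2) = subst_comp \<phi> r1 ++ subst_comp \<phi> r2"
  by (auto simp: subst_comp_def map_add_def fun_eq_iff split: option.splits)

lemma ran_add_sub: "ran (m1 ++ m2) \<subseteq> ran m1 \<union> ran m2"
  by (auto simp: ran_def map_add_def split: option.splits)

lemma main:
  "compat p \<sigma> q \<rho> \<Longrightarrow> \<sigma> = id_on (bn p) \<Longrightarrow> wf_pat p \<Longrightarrow>
   (\<forall>t\<in>ran \<rho>. vn t \<union> pn t \<subseteq> bn p) \<and>
   (\<forall>r \<phi> \<theta>. unify p r = Some (\<phi>, \<theta>) \<longrightarrow> unify q r = Some (subst_comp \<phi> \<rho>, \<theta>))"
proof (induction rule: compat.induct)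
  case (bind \<sigma> p y)
  have 1: "\<forall>t\<in>ran [y \<mapsto> hat_subst \<sigma> p]. vn t \<union> pn t \<subseteq> bn p"
    using hat_vars[OF bind(3), of "bn p"] bind(4) by simp
  have "unify (Bind y) r = Some (subst_comp \<phi> [y \<mapsto> hat_subst \<sigma> p], \<theta>)"
    if "unify p r = Some (\<phi>, \<theta>)" for r \<phi> \<theta>
    using bind_unify[OF bind(3) bind(5) _ that, of "bn p"] unfolding bind(4)
    by (auto simp: subst_comp_def fun_eq_iff simp del: app_subst.simps hat_subst.simps)
  then show ?case using 1 by blast
next
  case (var n)
  have "unify (Var n) r = Some (Map.empty, \<theta>)" if "unify (Var n) r = Some (\<phi>, \<theta>)" for r \<phi> \<theta>
    using that by (cases r) (auto split: if_splits)
  then show ?case by (auto simp: subst_comp_def)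
next
  case (prot n)
  have "unify (Prot n) r = Some (Map.empty, \<theta>)" if "unify (Prot n) r = Some (\<phi>, \<theta>)" for r \<phi> \<theta>
    using that by (cases r) (auto split: if_splits)
  then show ?case by (auto simp: subst_comp_def)
next
  case (prot_var n)
  have "unify (Var n) r = Some (Map.empty, \<theta>)" if "unify (Prot n) r = Some (\<phi>, \<theta>)" for r \<phi> \<theta>
    using that by (cases r) (auto split: if_splits)
  then show ?case by (auto simp: subst_comp_def)
next
  case (comp p1 \<sigma>1 q1 \<rho>1 p2 \<sigma>2 q2 \<rho>2)
  have w: "wf_pat p1" "wf_pat p2" "bn p1 \<inter> bn p2 = {}" using wf_comp[OF comp.prems(2)] by auto
  have bc: "bn (Comp p1 p2) = bn p1 \<union> bn p2" by (simp add: bn_def)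
  have "\<sigma>1 ++ \<sigma>2 = id_on (bn p1 \<union> bn p2)" using comp.prems(1) unfolding bc .
  note S = id_split[OF compat_dom[OF comp.hyps(1)] compat_dom[OF comp.hyps(2)] w(3) this]
  note I1 = comp.IH(1)[OF conjunct1[OF S] w(1)]
  note I2 = comp.IH(2)[OF conjunct2[OF S] w(2)]
  note I1a = conjunct1[OF I1] and I1b = conjunct2[OF I1]
  note I2a = conjunct1[OF I2] and I2b = conjunct2[OF I2]
  have R: "\<forall>t\<in>ran (\<rho>1 ++ \<rho>2). vn t \<union> pn t \<subseteq> bn (Comp p1 p2)"
  proof
    fix t assume "t \<in> ran (\<rho>1 ++ \<rho>2)"
    hence "t \<in> ran \<rho>1 \<union> ran \<rho>2" by (rule subsetD[OF ran_add_sub])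
    hence "t \<in> ran \<rho>1 \<or> t \<in> ran \<rho>2" by (simp only: Un_iff)
    moreover have "vn t \<union> pn t \<subseteq> bn p1" if "t \<in> ran \<rho>1" using I1a that by blast
    moreover have "vn t \<union> pn t \<subseteq> bn p2" if "t \<in> ran \<rho>2" using I2a that by blast
    ultimately show "vn t \<union> pn t \<subseteq> bn (Comp p1 p2)" unfolding bc by blast
  qed
  have U: "unify (Comp q1 q2) r = Some (subst_comp \<phi> (\<rho>1 ++ \<rho>2), \<theta>)"
    if u: "unify (Comp p1 p2) r = Some (\<phi>, \<theta>)" for r \<phi> \<theta>
  proof (cases r)
    case (Bind y)
    have c: "communicable (Comp p1 p2)" using u Bind by (simp split: if_splits)
    have "compat (Comp p1 p2) (\<sigma>1 ++ \<sigma>2) (Comp q1 q2) (\<rho>1 ++ \<rho>2)"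
      using comp.hyps by (rule compat.comp)
    from compat_comm[OF this c] have "Comp q1 q2 = Comp p1 p2" "\<rho>1 ++ \<rho>2 = Map.empty" by auto
    moreover have "\<phi> = Map.empty" using u Bind c by simp
    ultimately show ?thesis using u by (simp add: subst_comp_def)
  next
    case (Comp r1 r2)
    from u obtain s1 t1 s2 t2 where u1: "unify p1 r1 = Some (s1, t1)"
      and u2: "unify p2 r2 = Some (s2, t2)" and e: "\<phi> = s1 ++ s2" "\<theta> = t1 ++ t2"
      using Comp by (auto split: option.splits)
    have a1: "subst_comp (s1 ++ s2) \<rho>1 = subst_comp s1 \<rho>1"
    proof -
      have "map_option (app_subst (s1 ++ s2)) (\<rho>1 x) = map_option (app_subst s1) (\<rho>1 x)" for x
      proof (cases "\<rho>1 x")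
        case (Some t)
        hence "t \<in> ran \<rho>1" by (auto simp: ran_def)
        hence "vn t \<union> pn t \<subseteq> bn p1" using I1a by blast
        hence "\<forall>v\<in>vn t \<union> pn t. v \<notin> dom s2"
          using unify_dom[OF u2] w(3) by blast
        hence "\<forall>v\<in>vn t \<union> pn t. (s1 ++ s2) v = s1 v"
          by (simp add: map_add_dom_app_simps(3))
        then show ?thesis using Some app_cong by simp
      qed simp
      thus ?thesis by (simp add: subst_comp_def fun_eq_iff)
    qed
    have a2: "subst_comp (s1 ++ s2) \<rho>2 = subst_comp s2 \<rho>2"
    proof -
      have "map_option (app_subst (s1 ++ s2)) (\<rho>2 x) = map_option (app_subst s2) (\<rho>2 x)" for x
      proof (cases "\<rho>2 x")
        case (Some t)
        hence "t \<in> ran \<rho>2" by (auto simp: ran_def)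
        hence "vn t \<union> pn t \<subseteq> bn p2" using I2a by blast
        hence "\<forall>v\<in>vn t \<union> pn t. (s1 ++ s2) v = s2 v"
          using unify_dom[OF u2] by (auto simp: map_add_dom_app_simps(1))
        then show ?thesis using Some app_cong by simp
      qed simp
      thus ?thesis by (simp add: subst_comp_def fun_eq_iff)
    qed
    have v1: "unify q1 r1 = Some (subst_comp s1 \<rho>1, t1)" using I1b u1 by blast
    have v2: "unify q2 r2 = Some (subst_comp s2 \<rho>2, t2)" using I2b u2 by blast
    show ?thesis unfolding \<open>r = Comp r1 r2\<close> e subst_comp_add a1 a2 using v1 v2 by simp
  next
    case (Var x) then show ?thesis using u by simp
  next
    case (Prot x) then show ?thesis using u by simp
  qed
  show ?case using R U by blast
qed

theorem proposition3p21:
  fixes p q r :: "'n pat" and \<rho> \<phi> \<theta> :: "'n subst"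
  assumes "wf_pat p" and "wf_pat q" and "wf_pat r"
    and "is_subst \<rho>" and "is_subst \<phi>" and "is_subst \<theta>"
    and "compat p (id_on (bn p)) q \<rho>"
    and "unify p r = Some (\<phi>, \<theta>)"
  shows "unify q r = Some (subst_comp \<phi> \<rho>, \<theta>)"
  using main[OF assms(7) refl assms(1)] assms(8) by blast

end
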